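(* Consider the following model in $\mathbb{R}^2$. A base station (BS) is at $\mathbf{o}=(0,0)$ and a mobile station (MS) is at a point $\mathbf{o}'$ with $\|\mathbf{o}-\mathbf{o}'\|=d'>0$. For each type $k\in\{s,t\}$ fix radii $v_{k,1},v_{k,2}>0$ with $D_k:=\{\mathbf{p}:\|\mathbf{p}-\mathbf{o}\|\le v_{k,1},\ \|\mathbf{p}-\mathbf{o}'\|\le v_{k,2}\}$ of positive area, and fix $\lambda_s,\lambda_t>0$, $\gamma\in[0,1]$. Let $U$ be Bernoulli with mean $\gamma$; short scatterers form a homogeneous Poisson point process of intensity $\lambda_s$ and, conditionally on $U$, tall scatterers form an independent Poisson point process of intensity $U\lambda_t$. A scatterer of type $k$ is active if it lies in $D_k$; let $N_k$ be the number of active scatterers of type $k$, located at $\mathbf{p}_k^1,\dots,\mathbf{p}_k^{N_k}$, and set $X_k^i=\|\mathbf{p}_k^i-\mathbf{o}\|$, $Y_k^i=\|\mathbf{p}_k^i-\mathbf{o}'\|$. Each active scatterer carries a real random coefficient $R_k^i$; for each $k$ the coefficients $R_k^i$ are identically distributed, and the marks $R_k^i$ are independent of each other and of the scatterer locations. Let $\lambda>0$ (wavelength), $k_0>0$, and let $g_1,g_2$ be functions of two positive variables with $g_2>0$; set $\theta(X,Y)=2\pi g_1(X,Y)/\lambda$. The received power is $$P_r=k_0\Bigl|\sum_{k\in\{s,t\}}\sum_{i=1}^{N_k}\frac{R_k^i\exp\bigl(-j\,\theta(X_k^i,Y_k^i)\bigr)}{g_2(X_k^i,Y_k^i)}\Bigr|^2,$$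 with $j=\sqrt{-1}$. Let $\mu_k=\lambda_k\mathcal{A}(d',v_{k,1},v_{k,2})$ and, for $(X_k^i,Y_k^i)$ the distances of a point uniform on $D_k$ and $R_k^i$ an independent coefficient of type $k$, $$h_k=\mathrm{E}\Bigl[\tfrac{R_k^i\cos\theta(X_k^i,Y_k^i)}{g_2(X_k^i,Y_k^i)}\Bigr],\ g_k=\mathrm{Var}\Bigl[\tfrac{R_k^i\cos\theta(X_k^i,Y_k^i)}{g_2(X_k^i,Y_k^i)}\Bigr],\ h'_k=\mathrm{E}\Bigl[\tfrac{R_k^i\sin\theta(X_k^i,Y_k^i)}{g_2(X_k^i,Y_k^i)}\Bigr],\ g'_k=\mathrm{Var}\Bigl[\tfrac{R_k^i\sin\theta(X_k^i,Y_k^i)}{g_2(X_k^i,Y_k^i)}\Bigr]$$ (assumed finite). Then $$\mathrm{E}[P_r]=\gamma k_0\Bigl(\sum_{k}(g_k+h_k^2+g'_k+h_k'^2)\mu_k+\Bigl(\sum_k h_k\mu_k\Bigr)^2+\Bigl(\sum_k h'_k\mu_k\Bigr)^2\Bigr)+(1-\gamma)k_0\Bigl((g_s+h_s^2+g'_s+h_s'^2)\mu_s+(h_s\mu_s)^2+(h'_s\mu_s)^2\Bigr),$$ where the sums run over $k\in\{s,t\}$.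
   Context: $\mathcal{A}(d_0,a,b)$ denotes the area of the intersection of two disks of radii $a,b$ whose centers are at distance $d_0$. The model is that of a narrowband channel with isotropic unit-gain antennas, each multipath component interacting with exactly one active scatterer (e.g. scattering: $g_1=X+Y$, $g_2=XY$; reflection: $g_1=g_2=X+Y$). *)

theory Defs
  imports "HOL-Probability.Probability"
begin

text \<open>Area of the intersection of two disks of radii a, b whose centres are at distance d
  (the paper's A(d,a,b)); the plane R^2 is modelled as real \<times> real (Euclidean norm).\<close>
definition lens_area :: "real \<Rightarrow> real \<Rightarrow> real \<Rightarrow> real" where
  "lens_area d a b = measure lborel (cball (0::real \<times> real) a \<inter> cball (d, 0) b)"

text \<open>Poisson probability mass function with mean mu (mu = 0 gives the point mass at 0).\<close>
definition poisson_prob :: "real \<Rightarrow> nat \<Rightarrow> real" where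
  "poisson_prob mu n = mu ^ n / fact n * exp (- mu)"

text \<open>The sigma-algebra (as a family of events) generated by a random variable X:
  this is literally what indep_vars unfolds to.\<close>
definition gen_sets :: "'a measure \<Rightarrow> 'b measure \<Rightarrow> ('a \<Rightarrow> 'b) \<Rightarrow> 'a set set" where
  "gen_sets M N X = {X -` A \<inter> space M | A. A \<in> sets N}"

text \<open>Index of the independent random objects of the model.\<close>
datatype scat_var = VUNt | VNs | VPs nat | VPt nat | VRs nat | VRt nat

definition phase :: "real \<Rightarrow> (real \<Rightarrow> real \<Rightarrow> real) \<Rightarrow> real \<Rightarrow> real \<Rightarrow> real" where
  "phase wl g1 x y = 2 * pi * g1 x y / wl"

definition cos_comp :: "real \<Rightarrow> (real \<Rightarrow> real \<Rightarrow> real) \<Rightarrow> (real \<Rightarrow> real \<Rightarrow> real)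
    \<Rightarrow> real \<times> real \<Rightarrow> real \<Rightarrow> real \<times> real \<Rightarrow> real" where
  "cos_comp wl g1 g2 o' r p = r * cos (phase wl g1 (dist p 0) (dist p o')) / g2 (dist p 0) (dist p o')"

definition sin_comp :: "real \<Rightarrow> (real \<Rightarrow> real \<Rightarrow> real) \<Rightarrow> (real \<Rightarrow> real \<Rightarrow> real)
    \<Rightarrow> real \<times> real \<Rightarrow> real \<Rightarrow> real \<times> real \<Rightarrow> real" where
  "sin_comp wl g1 g2 o' r p = r * sin (phase wl g1 (dist p 0) (dist p o')) / g2 (dist p 0) (dist p o')"

definition path_gain :: "real \<Rightarrow> (real \<Rightarrow> real \<Rightarrow> real) \<Rightarrow> (real \<Rightarrow> real \<Rightarrow> real)
    \<Rightarrow> real \<times> real \<Rightarrow> real \<Rightarrow> real \<times> real \<Rightarrow> complex" where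
  "path_gain wl g1 g2 o' r p = complex_of_real r
      * exp (- \<i> * complex_of_real (phase wl g1 (dist p 0) (dist p o')))
      / complex_of_real (g2 (dist p 0) (dist p o'))"

end

theory Submission
  imports Defs
begin

lemma (in prob_space) indep_group:
  fixes F :: "'i \<Rightarrow> 'a set set" and I :: "'j \<Rightarrow> 'i set" and Z :: "'j \<Rightarrow> 'a \<Rightarrow> 'b"
  assumes indep: "indep_sets F UNIV"
    and stab: "\<And>v. Int_stable (F v)"
    and disj: "disjoint_family_on I J"
    and meas: "\<And>j. j \<in> J \<Longrightarrow> Z j \<in> measurable (sigma (space M) (\<Union>v\<in>I j. F v)) (N j)"
  shows "indep_vars N Z J"
proof -
  have ev: "\<And>v. F v \<subseteq> events" using indep by (auto simp: indep_sets_def)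
  have ind2: "indep_sets (\<lambda>j. sigma_sets (space M) (\<Union>v\<in>I j. F v)) J"
    by (rule indep_sets_collect_sigma[OF indep_sets_mono_index[OF _ indep]]) (use stab disj in auto)
  have pw: "\<And>j. (\<Union>v\<in>I j. F v) \<subseteq> Pow (space M)" using ev sets.sets_into_space by blast
  have sub: "\<And>j. sigma_sets (space M) (\<Union>v\<in>I j. F v) \<subseteq> events"
    using ev by (intro sets.sigma_sets_subset) auto
  have m: "\<And>j A. j \<in> J \<Longrightarrow> A \<in> sets (N j) \<Longrightarrow> Z j -` A \<inter> space M \<in> sigma_sets (space M) (\<Union>v\<in>I j. F v)"
    using measurable_sets[OF meas] by (simp add: sets_measure_of[OF pw] space_measure_of_conv)
  have sp: "\<And>j x. j \<in> J \<Longrightarrow> x \<in> space M \<Longrightarrow> Z j x \<in> space (N j)"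
    using measurable_space[OF meas] by (simp add: space_measure_of_conv)
  show ?thesis unfolding indep_vars_def2
  proof (intro conjI ballI)
    fix j assume j: "j \<in> J"
    show "random_variable (N j) (Z j)"
      unfolding measurable_def using m[OF j] sub sp[OF j] by blast
  next
    show "indep_sets (\<lambda>i. {Z i -` A \<inter> space M |A. A \<in> sets (N i)}) J"
      by (rule indep_sets_mono_sets[OF ind2]) (use m in auto)
  qed
qed

lemma meas_gen:
  assumes "X \<in> measurable M N" "gen_sets M N X \<subseteq> G" "G \<subseteq> Pow (space M)"
  shows "X \<in> measurable (sigma (space M) G) N"
  using assms unfolding measurable_def gen_sets_def
  by (auto simp: sets_measure_of[OF assms(3)] space_measure_of_conv)

lemma gen_sets_Int_stable: "Int_stable (gen_sets M N X)"
  unfolding Int_stable_def gen_sets_def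
proof safe
  fix A B assume "A \<in> sets N" "B \<in> sets N"
  then show "\<exists>C. (X -` A \<inter> space M) \<inter> (X -` B \<inter> space M) = X -` C \<inter> space M \<and> C \<in> sets N"
    by (intro exI[of _ "A \<inter> B"]) auto
qed

lemma gen_sets_Pow: "gen_sets M N X \<subseteq> Pow (space M)"
  unfolding gen_sets_def by auto

lemma poisson_moments:
  fixes mu :: real
  shows "(\<lambda>n. real n * poisson_prob mu n) sums mu"
    and "(\<lambda>n. (real n)\<^sup>2 * poisson_prob mu n) sums (mu + mu\<^sup>2)"
proof -
  have e: "(\<lambda>n. mu ^ n / fact n) sums exp mu"
    using exp_converges[of mu] by (simp add: divide_inverse_commute scaleR_conv_of_real mult.commute)
  have g1: "(\<lambda>k. real (Suc k) * mu ^ Suc k / fact (Suc k)) = (\<lambda>k. mu * (mu ^ k / fact k))"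
  proof
    fix k
    have f: "fact (Suc k) = real (Suc k) * (fact k :: real)" by (simp only: fact_Suc of_nat_mult)
    have "real (Suc k) \<noteq> 0" "(fact k :: real) \<noteq> 0" by auto
    have c: "c * (mu * m) / (c * fk) = mu * (m / fk)" if "c \<noteq> 0" for c m fk :: real
      using that by simp
    show "real (Suc k) * mu ^ Suc k / fact (Suc k) = mu * (mu ^ k / fact k)"
      unfolding f power_Suc by (rule c) simp
  qed
  have "(\<lambda>k. real (Suc k) * mu ^ Suc k / fact (Suc k)) sums (mu * exp mu)"
    unfolding g1 by (rule sums_mult[OF e])
  then have g: "(\<lambda>n. real n * mu ^ n / fact n) sums (mu * exp mu)"
    using sums_Suc_iff[of "\<lambda>n. real n * mu ^ n / fact n"] by simp
  have h1: "(\<lambda>k. (real (Suc k))\<^sup>2 * mu ^ Suc k / fact (Suc k)) = (\<lambda>k. mu * (real k * mu ^ k / fact k + mu ^ k / fact k))"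
  proof
    fix k
    have f: "fact (Suc k) = real (Suc k) * (fact k :: real)" by (simp only: fact_Suc of_nat_mult)
    have "real (Suc k) \<noteq> 0" "(fact k :: real) \<noteq> 0" by auto
    have c: "c * c * (mu * m) / (c * fk) = mu * ((c - 1) * m / fk + m / fk)" if "c \<noteq> 0" "fk \<noteq> 0" for c m fk :: real
      using that by (simp add: field_simps)
    show "(real (Suc k))\<^sup>2 * mu ^ Suc k / fact (Suc k) = mu * (real k * mu ^ k / fact k + mu ^ k / fact k)"
      unfolding f power_Suc power2_eq_square using c[where c="real (Suc k)" and m="mu^k" and fk="fact k"] by simp
  qed
  have "(\<lambda>k. (real (Suc k))\<^sup>2 * mu ^ Suc k / fact (Suc k)) sums (mu * (mu * exp mu + exp mu))"
    unfolding h1 by (intro sums_mult sums_add g e)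
  then have h: "(\<lambda>n. (real n)\<^sup>2 * mu ^ n / fact n) sums (mu * (mu * exp mu + exp mu))"
    using sums_Suc_iff[of "\<lambda>n. (real n)\<^sup>2 * mu ^ n / fact n"] by simp
  show "(\<lambda>n. real n * poisson_prob mu n) sums mu"
    using sums_mult2[OF g, of "exp (-mu)"] by (simp add: poisson_prob_def exp_minus field_simps)
  show "(\<lambda>n. (real n)\<^sup>2 * poisson_prob mu n) sums (mu + mu\<^sup>2)"
  proof -
    have "(mu * (mu * exp mu + exp mu)) * exp (-mu) = mu + mu\<^sup>2"
      by (simp add: exp_minus field_simps power2_eq_square)
    then show ?thesis
      using sums_mult2[OF h, of "exp (-mu)"] by (simp add: poisson_prob_def mult.assoc)
  qed
qed

lemma path_gain_Re: "Re (path_gain wl g1 g2 o' r p) = cos_comp wl g1 g2 o' r p"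
  and path_gain_Im: "Im (path_gain wl g1 g2 o' r p) = - sin_comp wl g1 g2 o' r p"
  by (simp_all add: path_gain_def cos_comp_def sin_comp_def Re_exp Im_exp)

lemma cos_comp_meas[measurable]:
  assumes "(\<lambda>z. g1 (fst z) (snd z)) \<in> borel_measurable borel"
          "(\<lambda>z. g2 (fst z) (snd z)) \<in> borel_measurable borel"
      and "f \<in> borel_measurable N" "g \<in> borel_measurable N"
  shows "(\<lambda>x. cos_comp wl g1 g2 o' (f x) (g x)) \<in> borel_measurable N"
    and "(\<lambda>x. sin_comp wl g1 g2 o' (f x) (g x)) \<in> borel_measurable N"
proof -
  have d: "(\<lambda>x. (dist (g x) 0, dist (g x) o')) \<in> borel_measurable N"
    using assms(4) by measurable
  have a: "(\<lambda>x. g1 (dist (g x) 0) (dist (g x) o')) \<in> borel_measurable N"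
    using measurable_compose[OF d assms(1)] by simp
  have b: "(\<lambda>x. g2 (dist (g x) 0) (dist (g x) o')) \<in> borel_measurable N"
    using measurable_compose[OF d assms(2)] by simp
  show "(\<lambda>x. cos_comp wl g1 g2 o' (f x) (g x)) \<in> borel_measurable N"
    unfolding cos_comp_def phase_def using a b assms(3) by measurable
  show "(\<lambda>x. sin_comp wl g1 g2 o' (f x) (g x)) \<in> borel_measurable N"
    unfolding sin_comp_def phase_def using a b assms(3) by measurable
qed

lemma (in prob_space) compound:
  fixes N :: "'a \<Rightarrow> nat" and A :: "nat \<Rightarrow> 'a \<Rightarrow> real"
  assumes Nm: "N \<in> measurable M (count_space UNIV)"
    and ind: "indep_vars (\<lambda>_. borel) (\<lambda>j. case j of None \<Rightarrow> (\<lambda>\<omega>. real (N \<omega>)) | Some i \<Rightarrow> A i) UNIV"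
    and int1: "\<And>i. integrable M (A i)" and int2: "\<And>i. integrable M (\<lambda>\<omega>. (A i \<omega>)\<^sup>2)"
    and E1: "\<And>i. integral\<^sup>L M (A i) = a" and E2: "\<And>i. integral\<^sup>L M (\<lambda>\<omega>. (A i \<omega>)\<^sup>2) = b"
    and m1: "(\<lambda>n. real n * prob {\<omega>\<in>space M. N \<omega> = n}) sums m1"
    and m2: "(\<lambda>n. (real n)\<^sup>2 * prob {\<omega>\<in>space M. N \<omega> = n}) sums m2"
  shows "integrable M (\<lambda>\<omega>. \<Sum>i<N \<omega>. A i \<omega>)"
    and "integral\<^sup>L M (\<lambda>\<omega>. \<Sum>i<N \<omega>. A i \<omega>) = m1 * a"
    and "integrable M (\<lambda>\<omega>. (\<Sum>i<N \<omega>. A i \<omega>)\<^sup>2)"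
    and "integral\<^sup>L M (\<lambda>\<omega>. (\<Sum>i<N \<omega>. A i \<omega>)\<^sup>2) = m1 * (b - a\<^sup>2) + m2 * a\<^sup>2"
proof -
  define P where "P n = prob {\<omega>\<in>space M. N \<omega> = n}" for n
  define D where "D n \<omega> = (if N \<omega> = n then 1 else 0::real)" for n \<omega>
  define S where "S n \<omega> = (\<Sum>i<n. A i \<omega>)" for n \<omega>
  define F where "F \<omega> = S (N \<omega>) \<omega>" for \<omega>
  have Am[measurable]: "\<And>i. A i \<in> borel_measurable M"
    using ind unfolding indep_vars_def2 by (metis (no_types, lifting) UNIV_I option.simps(5))
  have Nm'[measurable]: "N \<in> measurable M (count_space UNIV)" by (rule Nm)
  have Dm[measurable]: "\<And>n. D n \<in> borel_measurable M" unfolding D_def by measurable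
  have Sm[measurable]: "\<And>n. S n \<in> borel_measurable M" unfolding S_def by measurable
  have Fm[measurable]: "F \<in> borel_measurable M"
    unfolding F_def by (rule measurable_compose_countable'[where I=UNIV]) (auto intro: Nm)
  have intD: "integral\<^sup>L M (D n) = P n" for n
  proof -
    have "integral\<^sup>L M (D n) = integral\<^sup>L M (indicator {\<omega>\<in>space M. N \<omega> = n} :: 'a \<Rightarrow> real)"
      by (intro Bochner_Integration.integral_cong) (auto simp: D_def indicator_def)
    also have "\<dots> = P n"
    proof -
      have "{\<omega>\<in>space M. N \<omega> = n} \<inter> space M = {\<omega>\<in>space M. N \<omega> = n}" by auto
      then show ?thesis unfolding P_def integral_indicator by simp
    qed
    finally show ?thesis .
  qed
  have indD: "indep_vars (\<lambda>_. borel) (\<lambda>j. case j of None \<Rightarrow> D n | Some i \<Rightarrow> A i) UNIV" for n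
  proof -
    have "indep_vars (\<lambda>_. borel) (\<lambda>j x. (case j of None \<Rightarrow> (\<lambda>x. if x = real n then 1 else 0::real) | Some i \<Rightarrow> (\<lambda>x. x))
            ((case j of None \<Rightarrow> (\<lambda>\<omega>. real (N \<omega>)) | Some i \<Rightarrow> A i) x)) UNIV"
      by (rule indep_vars_compose2[OF ind]) (auto split: option.split)
    also have "(\<lambda>j x. (case j of None \<Rightarrow> (\<lambda>x. if x = real n then 1 else 0::real) | Some i \<Rightarrow> (\<lambda>x. x))
            ((case j of None \<Rightarrow> (\<lambda>\<omega>. real (N \<omega>)) | Some i \<Rightarrow> A i) x))
        = (\<lambda>j. case j of None \<Rightarrow> D n | Some i \<Rightarrow> A i)"
      by (auto simp: fun_eq_iff D_def split: option.split)
    finally show ?thesis .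
  qed
  have indD2: "indep_vars (\<lambda>_. borel) (\<lambda>j. case j of None \<Rightarrow> D n | Some i \<Rightarrow> (\<lambda>\<omega>. (A i \<omega>)\<^sup>2)) UNIV" for n
  proof -
    have "indep_vars (\<lambda>_. borel) (\<lambda>j x. (case j of None \<Rightarrow> (\<lambda>x. x) | Some i \<Rightarrow> (\<lambda>x. x\<^sup>2::real))
            ((case j of None \<Rightarrow> D n | Some i \<Rightarrow> A i) x)) UNIV"
      by (rule indep_vars_compose2[OF indD]) (auto split: option.split)
    also have "(\<lambda>j x. (case j of None \<Rightarrow> (\<lambda>x. x) | Some i \<Rightarrow> (\<lambda>x. x\<^sup>2::real))
            ((case j of None \<Rightarrow> D n | Some i \<Rightarrow> A i) x))
        = (\<lambda>j. case j of None \<Rightarrow> D n | Some i \<Rightarrow> (\<lambda>\<omega>. (A i \<omega>)\<^sup>2))"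
      by (auto simp: fun_eq_iff split: option.split)
    finally show ?thesis .
  qed
  have intD_int: "integrable M (D n)" for n
    unfolding D_def by (rule integrable_const_bound[where B=1]) auto
  have E_DA: "integral\<^sup>L M (\<lambda>\<omega>. D n \<omega> * A i \<omega>) = P n * a" and I_DA: "integrable M (\<lambda>\<omega>. D n \<omega> * A i \<omega>)" for n i
  proof -
    let ?X = "\<lambda>j. case j of None \<Rightarrow> D n | Some i \<Rightarrow> A i"
    have ii: "indep_vars (\<lambda>_. borel) ?X {None, Some i}"
      by (rule indep_vars_subset[OF indD]) auto
    have iX: "\<And>j. j \<in> {None, Some i} \<Longrightarrow> integrable M (?X j)"
      using intD_int int1 by auto
    show "integral\<^sup>L M (\<lambda>\<omega>. D n \<omega> * A i \<omega>) = P n * a"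
      using indep_vars_lebesgue_integral[OF _ ii iX] by (simp add: intD E1)
    show "integrable M (\<lambda>\<omega>. D n \<omega> * A i \<omega>)"
      using indep_vars_integrable[OF _ ii iX] by simp
  qed
  have E_DAA: "integral\<^sup>L M (\<lambda>\<omega>. D n \<omega> * (A i \<omega>)\<^sup>2) = P n * b" and I_DAA: "integrable M (\<lambda>\<omega>. D n \<omega> * (A i \<omega>)\<^sup>2)" for n i
  proof -
    let ?X = "\<lambda>j. case j of None \<Rightarrow> D n | Some i \<Rightarrow> (\<lambda>\<omega>. (A i \<omega>)\<^sup>2)"
    have ii: "indep_vars (\<lambda>_. borel) ?X {None, Some i}"
      by (rule indep_vars_subset[OF indD2]) auto
    have iX: "\<And>j. j \<in> {None, Some i} \<Longrightarrow> integrable M (?X j)"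
      using intD_int int2 by auto
    show "integral\<^sup>L M (\<lambda>\<omega>. D n \<omega> * (A i \<omega>)\<^sup>2) = P n * b"
      using indep_vars_lebesgue_integral[OF _ ii iX] by (simp add: intD E2)
    show "integrable M (\<lambda>\<omega>. D n \<omega> * (A i \<omega>)\<^sup>2)"
      using indep_vars_integrable[OF _ ii iX] by simp
  qed
  have E_DAB: "integral\<^sup>L M (\<lambda>\<omega>. D n \<omega> * A i \<omega> * A j \<omega>) = P n * a * a"
    and I_DAB: "integrable M (\<lambda>\<omega>. D n \<omega> * A i \<omega> * A j \<omega>)" if "i \<noteq> j" for n i j
  proof -
    let ?X = "\<lambda>j. case j of None \<Rightarrow> D n | Some i \<Rightarrow> A i"
    have ii: "indep_vars (\<lambda>_. borel) ?X {None, Some i, Some j}"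
      by (rule indep_vars_subset[OF indD]) auto
    have iX: "\<And>k. k \<in> {None, Some i, Some j} \<Longrightarrow> integrable M (?X k)"
      using intD_int int1 by auto
    show "integral\<^sup>L M (\<lambda>\<omega>. D n \<omega> * A i \<omega> * A j \<omega>) = P n * a * a"
      using indep_vars_lebesgue_integral[OF _ ii iX] that by (simp add: intD E1 mult.assoc)
    show "integrable M (\<lambda>\<omega>. D n \<omega> * A i \<omega> * A j \<omega>)"
      using indep_vars_integrable[OF _ ii iX] that by (simp add: mult.assoc)
  qed
  have E_gen: "integral\<^sup>L M (\<lambda>\<omega>. D n \<omega> * A i \<omega> * A j \<omega>) = P n * (if i = j then b else a * a)"
    and I_gen: "integrable M (\<lambda>\<omega>. D n \<omega> * A i \<omega> * A j \<omega>)" for n i j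
    using E_DAA[of n i] I_DAA[of n i] E_DAB[of i j n] I_DAB[of i j n]
    by (auto simp: power2_eq_square mult.assoc)
  define f where "f n \<omega> = D n \<omega> * (S n \<omega>)\<^sup>2" for n \<omega>
  have f_exp: "f n \<omega> = (\<Sum>i<n. \<Sum>j<n. D n \<omega> * A i \<omega> * A j \<omega>)" for n \<omega>
    unfolding f_def S_def power2_eq_square sum_product by (simp only: sum_distrib_left mult.assoc)
  have I_f: "integrable M (f n)" for n
    unfolding f_exp by (intro Bochner_Integration.integrable_sum I_gen)
  have inner: "(\<Sum>j<n. if i = j then b else c) = real n * c + (b - c)" if "i < n" for i n and c :: real
  proof -
    have "(\<Sum>j<n. if i = j then b else c) = (\<Sum>j<n. c + (if i = j then b - c else 0))"
      by (intro sum.cong) auto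
    also have "\<dots> = real n * c + (b - c)"
      using that by (simp add: sum.distrib)
    finally show ?thesis .
  qed
  have E_f: "integral\<^sup>L M (f n) = P n * (real n * (b - a\<^sup>2) + (real n)\<^sup>2 * a\<^sup>2)" for n
  proof -
    have "integral\<^sup>L M (f n) = (\<Sum>i<n. \<Sum>j<n. integral\<^sup>L M (\<lambda>\<omega>. D n \<omega> * A i \<omega> * A j \<omega>))"
      unfolding f_exp
      by (simp add: Bochner_Integration.integral_sum Bochner_Integration.integrable_sum I_gen)
    also have "\<dots> = (\<Sum>i<n. P n * (real n * (a * a) + (b - a * a)))"
      by (intro sum.cong refl) (simp add: E_gen sum_distrib_left[symmetric] inner)
    also have "\<dots> = P n * (real n * (b - a\<^sup>2) + (real n)\<^sup>2 * a\<^sup>2)"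
      by (simp add: power2_eq_square algebra_simps)
    finally show ?thesis .
  qed
  have f_nonneg: "f n \<omega> \<ge> 0" for n \<omega> by (simp add: f_def D_def)
  have f_single: "f n \<omega> = (if n = N \<omega> then (F \<omega>)\<^sup>2 else 0)" for n \<omega>
    by (auto simp: f_def D_def F_def)
  have f_sums: "(\<lambda>n. f n \<omega>) sums (F \<omega>)\<^sup>2" for \<omega>
    unfolding f_single using sums_single[of "N \<omega>" "\<lambda>_. (F \<omega>)\<^sup>2"] by simp
  have sumE: "(\<lambda>n. P n * (real n * (b - a\<^sup>2) + (real n)\<^sup>2 * a\<^sup>2)) sums (m1 * (b - a\<^sup>2) + m2 * a\<^sup>2)"
  proof -
    have "(\<lambda>n. real n * P n * (b - a\<^sup>2) + (real n)\<^sup>2 * P n * a\<^sup>2) sums (m1 * (b - a\<^sup>2) + m2 * a\<^sup>2)"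
      by (intro sums_add sums_mult2) (use m1 m2 in \<open>simp_all add: P_def\<close>)
    then show ?thesis by (simp add: algebra_simps)
  qed
  have summ: "summable (\<lambda>n. \<integral>\<omega>. norm (f n \<omega>) \<partial>M)"
  proof -
    have "(\<lambda>n. \<integral>\<omega>. norm (f n \<omega>) \<partial>M) = (\<lambda>n. integral\<^sup>L M (f n))"
      using f_nonneg by (intro ext Bochner_Integration.integral_cong) auto
    then show ?thesis using sumE by (simp add: E_f sums_summable)
  qed
  have AEs: "AE \<omega> in M. summable (\<lambda>n. norm (f n \<omega>))"
    using f_sums f_nonneg by (auto intro!: AE_I2 sums_summable)
  have Feq: "(\<lambda>\<omega>. (\<Sum>i<N \<omega>. A i \<omega>)\<^sup>2) = (\<lambda>\<omega>. \<Sum>n. f n \<omega>)"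
    using f_sums by (auto simp: F_def S_def sums_iff)
  have intF2: "integrable M (\<lambda>\<omega>. (\<Sum>i<N \<omega>. A i \<omega>)\<^sup>2)"
    unfolding Feq by (rule integrable_suminf[OF I_f AEs summ])
  then show "integrable M (\<lambda>\<omega>. (\<Sum>i<N \<omega>. A i \<omega>)\<^sup>2)" .
  show "integral\<^sup>L M (\<lambda>\<omega>. (\<Sum>i<N \<omega>. A i \<omega>)\<^sup>2) = m1 * (b - a\<^sup>2) + m2 * a\<^sup>2"
    using sums_integral[OF I_f AEs summ] sumE unfolding Feq E_f by (simp add: sums_unique2)
  define s where "s K \<omega> = (\<Sum>n<K. D n \<omega> * S n \<omega>)" for K \<omega>
  have s_eq: "s K \<omega> = (if N \<omega> < K then F \<omega> else 0)" for K \<omega>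
  proof -
    have "s K \<omega> = (\<Sum>n<K. if N \<omega> = n then S n \<omega> else 0)"
      unfolding s_def D_def by (intro sum.cong) auto
    then show ?thesis by (simp add: F_def)
  qed
  have sm[measurable]: "\<And>K. s K \<in> borel_measurable M" unfolding s_def by measurable
  have absle: "\<bar>x\<bar> \<le> 1 + x\<^sup>2" for x :: real
  proof -
    have "0 \<le> (\<bar>x\<bar> - 1)\<^sup>2" by simp
    then have "2 * \<bar>x\<bar> \<le> \<bar>x\<bar> * \<bar>x\<bar> + 1" by (simp add: power2_eq_square algebra_simps)
    moreover have "\<bar>x\<bar> * \<bar>x\<bar> = x\<^sup>2" by (simp add: power2_eq_square)
    ultimately show ?thesis by simp
  qed
  have FF: "F = (\<lambda>\<omega>. \<Sum>i<N \<omega>. A i \<omega>)" by (auto simp: F_def S_def)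
  have intw: "integrable M (\<lambda>\<omega>. 1 + (F \<omega>)\<^sup>2)"
    using intF2 unfolding FF by simp
  have lim: "AE \<omega> in M. (\<lambda>K. s K \<omega>) \<longlonglongrightarrow> F \<omega>"
  proof (intro AE_I2 tendsto_eventually)
    fix \<omega>
    show "\<forall>\<^sub>F K in sequentially. s K \<omega> = F \<omega>"
      unfolding eventually_sequentially by (intro exI[of _ "Suc (N \<omega>)"]) (auto simp: s_eq)
  qed
  have bnd: "\<And>K. AE \<omega> in M. norm (s K \<omega>) \<le> 1 + (F \<omega>)\<^sup>2"
    using absle by (auto simp: s_eq intro!: AE_I2)
  have intF: "integrable M F"
    by (rule integrable_dominated_convergence[OF Fm sm intw lim bnd])
  then show "integrable M (\<lambda>\<omega>. \<Sum>i<N \<omega>. A i \<omega>)" unfolding FF .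
  have lim2: "(\<lambda>K. integral\<^sup>L M (s K)) \<longlonglongrightarrow> integral\<^sup>L M F"
    by (rule integral_dominated_convergence[OF Fm sm intw lim bnd])
  have Es: "integral\<^sup>L M (s K) = (\<Sum>n<K. real n * P n * a)" for K
  proof -
    have "s K = (\<lambda>\<omega>. \<Sum>n<K. \<Sum>i<n. D n \<omega> * A i \<omega>)"
      unfolding s_def S_def by (simp only: sum_distrib_left)
    then have "integral\<^sup>L M (s K) = (\<Sum>n<K. \<Sum>i<n. integral\<^sup>L M (\<lambda>\<omega>. D n \<omega> * A i \<omega>))"
      by (simp add: Bochner_Integration.integral_sum Bochner_Integration.integrable_sum I_DA)
    then show ?thesis by (simp add: E_DA mult.assoc)
  qed
  have "(\<lambda>n. real n * P n * a) sums (m1 * a)"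
    using sums_mult2[OF m1, of a] by (simp add: P_def)
  then have "(\<lambda>K. integral\<^sup>L M (s K)) \<longlonglongrightarrow> m1 * a"
    unfolding Es sums_def .
  then show "integral\<^sup>L M (\<lambda>\<omega>. \<Sum>i<N \<omega>. A i \<omega>) = m1 * a"
    using lim2 LIMSEQ_unique unfolding FF by blast
qed

theorem theorem1:
  fixes M :: "'a measure"
    and U :: "'a \<Rightarrow> bool" and Ns Nt :: "'a \<Rightarrow> nat"
    and Ps Pt :: "nat \<Rightarrow> 'a \<Rightarrow> real \<times> real"
    and Rs Rt :: "nat \<Rightarrow> 'a \<Rightarrow> real"
    and o' :: "real \<times> real"
    and d' vs1 vs2 vt1 vt2 lam_s lam_t \<gamma> wl k0 :: real
    and g1 g2 :: "real \<Rightarrow> real \<Rightarrow> real"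
  defines "Ds \<equiv> cball (0::real\<times>real) vs1 \<inter> cball o' vs2"
    and "Dt \<equiv> cball (0::real\<times>real) vt1 \<inter> cball o' vt2"
    and "\<mu>s \<equiv> lam_s * lens_area d' vs1 vs2"
    and "\<mu>t \<equiv> lam_t * lens_area d' vt1 vt2"
    and "hs \<equiv> integral\<^sup>L M (\<lambda>\<omega>. cos_comp wl g1 g2 o' (Rs 0 \<omega>) (Ps 0 \<omega>))"
    and "gs \<equiv> integral\<^sup>L M (\<lambda>\<omega>. (cos_comp wl g1 g2 o' (Rs 0 \<omega>) (Ps 0 \<omega>)
                 - integral\<^sup>L M (\<lambda>\<omega>. cos_comp wl g1 g2 o' (Rs 0 \<omega>) (Ps 0 \<omega>)))\<^sup>2)"
    and "hs' \<equiv> integral\<^sup>L M (\<lambda>\<omega>. sin_comp wl g1 g2 o' (Rs 0 \<omega>) (Ps 0 \<omega>))"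
    and "gs' \<equiv> integral\<^sup>L M (\<lambda>\<omega>. (sin_comp wl g1 g2 o' (Rs 0 \<omega>) (Ps 0 \<omega>)
                 - integral\<^sup>L M (\<lambda>\<omega>. sin_comp wl g1 g2 o' (Rs 0 \<omega>) (Ps 0 \<omega>)))\<^sup>2)"
    and "ht \<equiv> integral\<^sup>L M (\<lambda>\<omega>. cos_comp wl g1 g2 o' (Rt 0 \<omega>) (Pt 0 \<omega>))"
    and "gt \<equiv> integral\<^sup>L M (\<lambda>\<omega>. (cos_comp wl g1 g2 o' (Rt 0 \<omega>) (Pt 0 \<omega>)
                 - integral\<^sup>L M (\<lambda>\<omega>. cos_comp wl g1 g2 o' (Rt 0 \<omega>) (Pt 0 \<omega>)))\<^sup>2)"
    and "ht' \<equiv> integral\<^sup>L M (\<lambda>\<omega>. sin_comp wl g1 g2 o' (Rt 0 \<omega>) (Pt 0 \<omega>))"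
    and "gt' \<equiv> integral\<^sup>L M (\<lambda>\<omega>. (sin_comp wl g1 g2 o' (Rt 0 \<omega>) (Pt 0 \<omega>)
                 - integral\<^sup>L M (\<lambda>\<omega>. sin_comp wl g1 g2 o' (Rt 0 \<omega>) (Pt 0 \<omega>)))\<^sup>2)"
    and "Pr \<equiv> \<lambda>\<omega>. k0 * (cmod ((\<Sum>i<Ns \<omega>. path_gain wl g1 g2 o' (Rs i \<omega>) (Ps i \<omega>))
                            + (\<Sum>i<Nt \<omega>. path_gain wl g1 g2 o' (Rt i \<omega>) (Pt i \<omega>))))\<^sup>2"
  assumes M: "prob_space M"
    and o': "norm o' = d'" "d' > 0"
    and radii: "vs1 > 0" "vs2 > 0" "vt1 > 0" "vt2 > 0"
    and area_pos: "emeasure lborel Ds > 0" "emeasure lborel Dt > 0"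
    and lam: "lam_s > 0" "lam_t > 0"
    and gam: "0 \<le> \<gamma>" "\<gamma> \<le> 1"
    and wl: "wl > 0" and k0: "k0 > 0"
    and g2_pos: "\<And>x y. x > 0 \<Longrightarrow> y > 0 \<Longrightarrow> g2 x y > 0"
    and g_meas: "(\<lambda>z. g1 (fst z) (snd z)) \<in> borel_measurable borel"
                "(\<lambda>z. g2 (fst z) (snd z)) \<in> borel_measurable borel"
    and meas: "U \<in> measurable M (count_space UNIV)"
      "Ns \<in> measurable M (count_space UNIV)" "Nt \<in> measurable M (count_space UNIV)"
      "\<And>i. Ps i \<in> borel_measurable M" "\<And>i. Pt i \<in> borel_measurable M"
      "\<And>i. Rs i \<in> borel_measurable M" "\<And>i. Rt i \<in> borel_measurable M"
    and Ns_dist: "\<And>n. measure M {\<omega> \<in> space M. Ns \<omega> = n} = poisson_prob \<mu>s n"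
    and UNt_dist: "\<And>u n. measure M {\<omega> \<in> space M. U \<omega> = u \<and> Nt \<omega> = n}
                     = (if u then \<gamma> else 1 - \<gamma>) * poisson_prob (if u then \<mu>t else 0) n"
    and Ps_unif: "\<And>i. distr M lborel (Ps i) = uniform_measure lborel Ds"
    and Pt_unif: "\<And>i. distr M lborel (Pt i) = uniform_measure lborel Dt"
    and Rs_id: "\<And>i. distr M borel (Rs i) = distr M borel (Rs 0)"
    and Rt_id: "\<And>i. distr M borel (Rt i) = distr M borel (Rt 0)"
    and indep: "prob_space.indep_sets M (\<lambda>v. case v of
                   VUNt \<Rightarrow> gen_sets M (count_space UNIV) (\<lambda>\<omega>. (U \<omega>, Nt \<omega>))
                 | VNs \<Rightarrow> gen_sets M (count_space UNIV) Ns
                 | VPs i \<Rightarrow> gen_sets M borel (Ps i)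
                 | VPt i \<Rightarrow> gen_sets M borel (Pt i)
                 | VRs i \<Rightarrow> gen_sets M borel (Rs i)
                 | VRt i \<Rightarrow> gen_sets M borel (Rt i)) UNIV"
    and finite_moments:
      "integrable M (\<lambda>\<omega>. cos_comp wl g1 g2 o' (Rs 0 \<omega>) (Ps 0 \<omega>))"
      "integrable M (\<lambda>\<omega>. (cos_comp wl g1 g2 o' (Rs 0 \<omega>) (Ps 0 \<omega>))\<^sup>2)"
      "integrable M (\<lambda>\<omega>. sin_comp wl g1 g2 o' (Rs 0 \<omega>) (Ps 0 \<omega>))"
      "integrable M (\<lambda>\<omega>. (sin_comp wl g1 g2 o' (Rs 0 \<omega>) (Ps 0 \<omega>))\<^sup>2)"
      "integrable M (\<lambda>\<omega>. cos_comp wl g1 g2 o' (Rt 0 \<omega>) (Pt 0 \<omega>))"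
      "integrable M (\<lambda>\<omega>. (cos_comp wl g1 g2 o' (Rt 0 \<omega>) (Pt 0 \<omega>))\<^sup>2)"
      "integrable M (\<lambda>\<omega>. sin_comp wl g1 g2 o' (Rt 0 \<omega>) (Pt 0 \<omega>))"
      "integrable M (\<lambda>\<omega>. (sin_comp wl g1 g2 o' (Rt 0 \<omega>) (Pt 0 \<omega>))\<^sup>2)"
  shows "integrable M Pr \<and>
    integral\<^sup>L M Pr =
      \<gamma> * k0 * ((gs + hs\<^sup>2 + gs' + hs'\<^sup>2) * \<mu>s + (gt + ht\<^sup>2 + gt' + ht'\<^sup>2) * \<mu>t
                + (hs * \<mu>s + ht * \<mu>t)\<^sup>2 + (hs' * \<mu>s + ht' * \<mu>t)\<^sup>2)
    + (1 - \<gamma>) * k0 * ((gs + hs\<^sup>2 + gs' + hs'\<^sup>2) * \<mu>s + (hs * \<mu>s)\<^sup>2 + (hs' * \<mu>s)\<^sup>2)"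
proof -
  interpret prob_space M by (rule M)
  have hs_d: "hs \<equiv> integral\<^sup>L M (\<lambda>\<omega>. cos_comp wl g1 g2 o' (Rs 0 \<omega>) (Ps 0 \<omega>))" by fact
  have gs_d: "gs \<equiv> integral\<^sup>L M (\<lambda>\<omega>. (cos_comp wl g1 g2 o' (Rs 0 \<omega>) (Ps 0 \<omega>)
                 - integral\<^sup>L M (\<lambda>\<omega>. cos_comp wl g1 g2 o' (Rs 0 \<omega>) (Ps 0 \<omega>)))\<^sup>2)" by fact
  have hs'_d: "hs' \<equiv> integral\<^sup>L M (\<lambda>\<omega>. sin_comp wl g1 g2 o' (Rs 0 \<omega>) (Ps 0 \<omega>))" by fact
  have gs'_d: "gs' \<equiv> integral\<^sup>L M (\<lambda>\<omega>. (sin_comp wl g1 g2 o' (Rs 0 \<omega>) (Ps 0 \<omega>)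
                 - integral\<^sup>L M (\<lambda>\<omega>. sin_comp wl g1 g2 o' (Rs 0 \<omega>) (Ps 0 \<omega>)))\<^sup>2)" by fact
  have ht_d: "ht \<equiv> integral\<^sup>L M (\<lambda>\<omega>. cos_comp wl g1 g2 o' (Rt 0 \<omega>) (Pt 0 \<omega>))" by fact
  have gt_d: "gt \<equiv> integral\<^sup>L M (\<lambda>\<omega>. (cos_comp wl g1 g2 o' (Rt 0 \<omega>) (Pt 0 \<omega>)
                 - integral\<^sup>L M (\<lambda>\<omega>. cos_comp wl g1 g2 o' (Rt 0 \<omega>) (Pt 0 \<omega>)))\<^sup>2)" by fact
  have ht'_d: "ht' \<equiv> integral\<^sup>L M (\<lambda>\<omega>. sin_comp wl g1 g2 o' (Rt 0 \<omega>) (Pt 0 \<omega>))" by fact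
  have gt'_d: "gt' \<equiv> integral\<^sup>L M (\<lambda>\<omega>. (sin_comp wl g1 g2 o' (Rt 0 \<omega>) (Pt 0 \<omega>)
                 - integral\<^sup>L M (\<lambda>\<omega>. sin_comp wl g1 g2 o' (Rt 0 \<omega>) (Pt 0 \<omega>)))\<^sup>2)" by fact
  have Pr_d: "Pr \<equiv> \<lambda>\<omega>. k0 * (cmod ((\<Sum>i<Ns \<omega>. path_gain wl g1 g2 o' (Rs i \<omega>) (Ps i \<omega>))
                            + (\<Sum>i<Nt \<omega>. path_gain wl g1 g2 o' (Rt i \<omega>) (Pt i \<omega>))))\<^sup>2" by fact
  note [measurable] = meas
  define Fam where "Fam = (\<lambda>v. case v of
                   VUNt \<Rightarrow> gen_sets M (count_space UNIV) (\<lambda>\<omega>. (U \<omega>, Nt \<omega>))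
                 | VNs \<Rightarrow> gen_sets M (count_space UNIV) Ns
                 | VPs i \<Rightarrow> gen_sets M borel (Ps i)
                 | VPt i \<Rightarrow> gen_sets M borel (Pt i)
                 | VRs i \<Rightarrow> gen_sets M borel (Rs i)
                 | VRt i \<Rightarrow> gen_sets M borel (Rt i))"
  have indF: "indep_sets Fam UNIV" using indep unfolding Fam_def .
  have stab: "\<And>v. Int_stable (Fam v)"
    by (case_tac v) (simp_all add: Fam_def gen_sets_Int_stable)
  have powF: "\<And>v. Fam v \<subseteq> Pow (space M)"
    by (case_tac v) (simp_all add: Fam_def gen_sets_Pow)
  have powU: "(\<Union>v\<in>I. Fam v) \<subseteq> Pow (space M)" for I using powF by blast
  have UNm: "(\<lambda>\<omega>. (U \<omega>, Nt \<omega>)) \<in> measurable M (count_space UNIV)"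
  proof (subst measurable_count_space_eq2_countable, safe)
    fix u n
    have "(\<lambda>\<omega>. (U \<omega>, Nt \<omega>)) -` {(u, n)} \<inter> space M = {\<omega>\<in>space M. U \<omega> = u \<and> Nt \<omega> = n}" by auto
    also have "\<dots> \<in> sets M" by measurable
    finally show "(\<lambda>\<omega>. (U \<omega>, Nt \<omega>)) -` {(u, n)} \<inter> space M \<in> sets M" .
  qed auto
  have mPs: "VPs i \<in> I \<Longrightarrow> Ps i \<in> borel_measurable (sigma (space M) (\<Union>v\<in>I. Fam v))" for i I
    by (rule meas_gen[OF meas(4) _ powU]) (force simp: Fam_def)
  have mPt: "VPt i \<in> I \<Longrightarrow> Pt i \<in> borel_measurable (sigma (space M) (\<Union>v\<in>I. Fam v))" for i I
    by (rule meas_gen[OF meas(5) _ powU]) (force simp: Fam_def)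
  have mRs: "VRs i \<in> I \<Longrightarrow> Rs i \<in> borel_measurable (sigma (space M) (\<Union>v\<in>I. Fam v))" for i I
    by (rule meas_gen[OF meas(6) _ powU]) (force simp: Fam_def)
  have mRt: "VRt i \<in> I \<Longrightarrow> Rt i \<in> borel_measurable (sigma (space M) (\<Union>v\<in>I. Fam v))" for i I
    by (rule meas_gen[OF meas(7) _ powU]) (force simp: Fam_def)
  have mNs: "VNs \<in> I \<Longrightarrow> Ns \<in> measurable (sigma (space M) (\<Union>v\<in>I. Fam v)) (count_space UNIV)" for I
    by (rule meas_gen[OF meas(2) _ powU]) (force simp: Fam_def)
  have mUN: "VUNt \<in> I \<Longrightarrow> (\<lambda>\<omega>. (U \<omega>, Nt \<omega>)) \<in> measurable (sigma (space M) (\<Union>v\<in>I. Fam v)) (count_space UNIV)" for I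
    by (rule meas_gen[OF UNm _ powU]) (force simp: Fam_def)
  have mNt: "VUNt \<in> I \<Longrightarrow> Nt \<in> measurable (sigma (space M) (\<Union>v\<in>I. Fam v)) (count_space UNIV)" for I
    using measurable_compose[OF mUN measurable_count_space, of I snd] by simp
  define Cs where "Cs i \<omega> = cos_comp wl g1 g2 o' (Rs i \<omega>) (Ps i \<omega>)" for i \<omega>
  define Ss where "Ss i \<omega> = sin_comp wl g1 g2 o' (Rs i \<omega>) (Ps i \<omega>)" for i \<omega>
  define Ct where "Ct i \<omega> = cos_comp wl g1 g2 o' (Rt i \<omega>) (Pt i \<omega>)" for i \<omega>
  define St where "St i \<omega> = sin_comp wl g1 g2 o' (Rt i \<omega>) (Pt i \<omega>)" for i \<omega>
  have mCs: "VPs i \<in> I \<Longrightarrow> VRs i \<in> I \<Longrightarrow> Cs i \<in> borel_measurable (sigma (space M) (\<Union>v\<in>I. Fam v))"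
   and mSs: "VPs i \<in> I \<Longrightarrow> VRs i \<in> I \<Longrightarrow> Ss i \<in> borel_measurable (sigma (space M) (\<Union>v\<in>I. Fam v))"
   and mCt: "VPt i \<in> I \<Longrightarrow> VRt i \<in> I \<Longrightarrow> Ct i \<in> borel_measurable (sigma (space M) (\<Union>v\<in>I. Fam v))"
   and mSt: "VPt i \<in> I \<Longrightarrow> VRt i \<in> I \<Longrightarrow> St i \<in> borel_measurable (sigma (space M) (\<Union>v\<in>I. Fam v))" for i I
    unfolding Cs_def Ss_def Ct_def St_def
    by (intro cos_comp_meas[OF g_meas] mPs mRs mPt mRt; simp)+
  have sameS: "integrable M (\<lambda>\<omega>. h ((Rs i \<omega>, 0), Ps i \<omega>)) = integrable M (\<lambda>\<omega>. h ((Rs 0 \<omega>, 0), Ps 0 \<omega>)) \<and>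
      integral\<^sup>L M (\<lambda>\<omega>. h ((Rs i \<omega>, 0), Ps i \<omega>)) = integral\<^sup>L M (\<lambda>\<omega>. h ((Rs 0 \<omega>, 0), Ps 0 \<omega>))"
    if hm: "(h :: (real \<times> real) \<times> (real \<times> real) \<Rightarrow> real) \<in> borel_measurable (borel \<Otimes>\<^sub>M borel)" for h i
  proof -
    have J: "distr M (borel \<Otimes>\<^sub>M borel) (\<lambda>\<omega>. ((Rs k \<omega>, 0::real), Ps k \<omega>)) =
             distr (distr M borel (Rs k)) borel (\<lambda>r. (r, 0::real)) \<Otimes>\<^sub>M distr M lborel (Ps k)" for k
    proof -
      have cb: "case_bool (borel :: (real\<times>real) measure) borel = (\<lambda>_. borel)"
        by (auto simp: fun_eq_iff split: bool.split)
      have "indep_vars (\<lambda>_. borel) (case_bool (\<lambda>\<omega>. (Rs k \<omega>, 0::real)) (Ps k)) UNIV"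
      proof (rule indep_group[OF indF stab, where I="case_bool {VRs k} {VPs k}"])
        show "disjoint_family_on (case_bool {VRs k} {VPs k}) UNIV"
          by (auto simp: disjoint_family_on_def split: bool.split)
        fix j :: bool
        show "case_bool (\<lambda>\<omega>. (Rs k \<omega>, 0::real)) (Ps k) j \<in> borel_measurable (sigma (space M) (\<Union>v\<in>case_bool {VRs k} {VPs k} j. Fam v))"
        proof (cases j)
          case True
          note mR[measurable] = mRs[of k "{VRs k}", simplified]
          have "(\<lambda>\<omega>. (Rs k \<omega>, 0::real)) \<in> borel_measurable (sigma (space M) (Fam (VRs k)))"
            by measurable
          then show ?thesis using True by simp
        next
          case False
          then show ?thesis using mPs[of k "{VPs k}"] by simp
        qed
      qed
      then have iv: "indep_var borel (\<lambda>\<omega>. (Rs k \<omega>, 0::real)) borel (Ps k)"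
        unfolding indep_var_def cb .
      have "distr M (borel \<Otimes>\<^sub>M borel) (\<lambda>\<omega>. ((Rs k \<omega>, 0::real), Ps k \<omega>)) =
            distr M borel (\<lambda>\<omega>. (Rs k \<omega>, 0::real)) \<Otimes>\<^sub>M distr M borel (Ps k)"
        using iv unfolding indep_var_distribution_eq by simp
      also have "distr M borel (\<lambda>\<omega>. (Rs k \<omega>, 0::real)) = distr (distr M borel (Rs k)) borel (\<lambda>r. (r, 0::real))"
        by (subst distr_distr) (auto simp: comp_def)
      also have "distr M borel (Ps k) = distr M lborel (Ps k)"
        by (rule distr_cong) auto
      finally show ?thesis .
    qed
    have Jeq: "distr M (borel \<Otimes>\<^sub>M borel) (\<lambda>\<omega>. ((Rs i \<omega>, 0::real), Ps i \<omega>)) =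
               distr M (borel \<Otimes>\<^sub>M borel) (\<lambda>\<omega>. ((Rs 0 \<omega>, 0::real), Ps 0 \<omega>))"
      unfolding J Rs_id[of i] Ps_unif ..
    have mm: "(\<lambda>\<omega>. ((Rs k \<omega>, 0::real), Ps k \<omega>)) \<in> measurable M (borel \<Otimes>\<^sub>M borel)" for k
      by measurable
    show ?thesis
      using integrable_distr_eq[OF mm[of i] hm] integrable_distr_eq[OF mm[of 0] hm]
        integral_distr[OF mm[of i] hm] integral_distr[OF mm[of 0] hm] Jeq by simp
  qed
  have sameT: "integrable M (\<lambda>\<omega>. h ((Rt i \<omega>, 0), Pt i \<omega>)) = integrable M (\<lambda>\<omega>. h ((Rt 0 \<omega>, 0), Pt 0 \<omega>)) \<and>
      integral\<^sup>L M (\<lambda>\<omega>. h ((Rt i \<omega>, 0), Pt i \<omega>)) = integral\<^sup>L M (\<lambda>\<omega>. h ((Rt 0 \<omega>, 0), Pt 0 \<omega>))"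
    if hm: "(h :: (real \<times> real) \<times> (real \<times> real) \<Rightarrow> real) \<in> borel_measurable (borel \<Otimes>\<^sub>M borel)" for h i
  proof -
    have J: "distr M (borel \<Otimes>\<^sub>M borel) (\<lambda>\<omega>. ((Rt k \<omega>, 0::real), Pt k \<omega>)) =
             distr (distr M borel (Rt k)) borel (\<lambda>r. (r, 0::real)) \<Otimes>\<^sub>M distr M lborel (Pt k)" for k
    proof -
      have cb: "case_bool (borel :: (real\<times>real) measure) borel = (\<lambda>_. borel)"
        by (auto simp: fun_eq_iff split: bool.split)
      have "indep_vars (\<lambda>_. borel) (case_bool (\<lambda>\<omega>. (Rt k \<omega>, 0::real)) (Pt k)) UNIV"
      proof (rule indep_group[OF indF stab, where I="case_bool {VRt k} {VPt k}"])
        show "disjoint_family_on (case_bool {VRt k} {VPt k}) UNIV"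
          by (auto simp: disjoint_family_on_def split: bool.split)
        fix j :: bool
        show "case_bool (\<lambda>\<omega>. (Rt k \<omega>, 0::real)) (Pt k) j \<in> borel_measurable (sigma (space M) (\<Union>v\<in>case_bool {VRt k} {VPt k} j. Fam v))"
        proof (cases j)
          case True
          note mR[measurable] = mRt[of k "{VRt k}", simplified]
          have "(\<lambda>\<omega>. (Rt k \<omega>, 0::real)) \<in> borel_measurable (sigma (space M) (Fam (VRt k)))"
            by measurable
          then show ?thesis using True by simp
        next
          case False
          then show ?thesis using mPt[of k "{VPt k}"] by simp
        qed
      qed
      then have iv: "indep_var borel (\<lambda>\<omega>. (Rt k \<omega>, 0::real)) borel (Pt k)"
        unfolding indep_var_def cb .
      have "distr M (borel \<Otimes>\<^sub>M borel) (\<lambda>\<omega>. ((Rt k \<omega>, 0::real), Pt k \<omega>)) =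
            distr M borel (\<lambda>\<omega>. (Rt k \<omega>, 0::real)) \<Otimes>\<^sub>M distr M borel (Pt k)"
        using iv unfolding indep_var_distribution_eq by simp
      also have "distr M borel (\<lambda>\<omega>. (Rt k \<omega>, 0::real)) = distr (distr M borel (Rt k)) borel (\<lambda>r. (r, 0::real))"
        by (subst distr_distr) (auto simp: comp_def)
      also have "distr M borel (Pt k) = distr M lborel (Pt k)"
        by (rule distr_cong) auto
      finally show ?thesis .
    qed
    have Jeq: "distr M (borel \<Otimes>\<^sub>M borel) (\<lambda>\<omega>. ((Rt i \<omega>, 0::real), Pt i \<omega>)) =
               distr M (borel \<Otimes>\<^sub>M borel) (\<lambda>\<omega>. ((Rt 0 \<omega>, 0::real), Pt 0 \<omega>))"
      unfolding J Rt_id[of i] Pt_unif ..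
    have mm: "(\<lambda>\<omega>. ((Rt k \<omega>, 0::real), Pt k \<omega>)) \<in> measurable M (borel \<Otimes>\<^sub>M borel)" for k
      by measurable
    show ?thesis
      using integrable_distr_eq[OF mm[of i] hm] integrable_distr_eq[OF mm[of 0] hm]
        integral_distr[OF mm[of i] hm] integral_distr[OF mm[of 0] hm] Jeq by simp
  qed
  have fb: "(fst :: real \<times> real \<Rightarrow> real) \<in> borel_measurable borel"
    using measurable_fst[of "borel::real measure" "borel::real measure"] by (simp add: borel_prod)
  have f1: "(\<lambda>x::(real \<times> real) \<times> (real \<times> real). fst (fst x)) \<in> borel_measurable (borel \<Otimes>\<^sub>M borel)"
    using measurable_compose[OF measurable_fst[of "borel::(real \<times> real) measure" "borel::(real \<times> real) measure"] fb] by (simp add: comp_def)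
  have hcm: "(\<lambda>x::(real \<times> real) \<times> (real \<times> real). cos_comp wl g1 g2 o' (fst (fst x)) (snd x)) \<in> borel_measurable (borel \<Otimes>\<^sub>M borel)"
    by (rule cos_comp_meas[OF g_meas f1 measurable_snd])
  have hsm: "(\<lambda>x::(real \<times> real) \<times> (real \<times> real). sin_comp wl g1 g2 o' (fst (fst x)) (snd x)) \<in> borel_measurable (borel \<Otimes>\<^sub>M borel)"
    by (rule cos_comp_meas[OF g_meas f1 measurable_snd])
  have hcm2: "(\<lambda>x::(real \<times> real) \<times> (real \<times> real). (cos_comp wl g1 g2 o' (fst (fst x)) (snd x))\<^sup>2) \<in> borel_measurable (borel \<Otimes>\<^sub>M borel)"
    using hcm by measurable
  have hsm2: "(\<lambda>x::(real \<times> real) \<times> (real \<times> real). (sin_comp wl g1 g2 o' (fst (fst x)) (snd x))\<^sup>2) \<in> borel_measurable (borel \<Otimes>\<^sub>M borel)"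
    using hsm by measurable
  have iCs1: "integrable M (Cs i)" and iCs2: "integrable M (\<lambda>\<omega>. (Cs i \<omega>)\<^sup>2)"
    and eCs1: "integral\<^sup>L M (Cs i) = hs" and eCs2: "integral\<^sup>L M (\<lambda>\<omega>. (Cs i \<omega>)\<^sup>2) = integral\<^sup>L M (\<lambda>\<omega>. (Cs 0 \<omega>)\<^sup>2)" for i
    using sameS[OF hcm, of i] sameS[OF hcm2, of i] finite_moments(1,2)
    by (simp_all add: Cs_def[abs_def] hs_d)
  have iSs1: "integrable M (Ss i)" and iSs2: "integrable M (\<lambda>\<omega>. (Ss i \<omega>)\<^sup>2)"
    and eSs1: "integral\<^sup>L M (Ss i) = hs'" and eSs2: "integral\<^sup>L M (\<lambda>\<omega>. (Ss i \<omega>)\<^sup>2) = integral\<^sup>L M (\<lambda>\<omega>. (Ss 0 \<omega>)\<^sup>2)" for i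
    using sameS[OF hsm, of i] sameS[OF hsm2, of i] finite_moments(3,4)
    by (simp_all add: Ss_def[abs_def] hs'_d)
  have iCt1: "integrable M (Ct i)" and iCt2: "integrable M (\<lambda>\<omega>. (Ct i \<omega>)\<^sup>2)"
    and eCt1: "integral\<^sup>L M (Ct i) = ht" and eCt2: "integral\<^sup>L M (\<lambda>\<omega>. (Ct i \<omega>)\<^sup>2) = integral\<^sup>L M (\<lambda>\<omega>. (Ct 0 \<omega>)\<^sup>2)" for i
    using sameT[OF hcm, of i] sameT[OF hcm2, of i] finite_moments(5,6)
    by (simp_all add: Ct_def[abs_def] ht_d)
  have iSt1: "integrable M (St i)" and iSt2: "integrable M (\<lambda>\<omega>. (St i \<omega>)\<^sup>2)"
    and eSt1: "integral\<^sup>L M (St i) = ht'" and eSt2: "integral\<^sup>L M (\<lambda>\<omega>. (St i \<omega>)\<^sup>2) = integral\<^sup>L M (\<lambda>\<omega>. (St 0 \<omega>)\<^sup>2)" for i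
    using sameT[OF hsm, of i] sameT[OF hsm2, of i] finite_moments(7,8)
    by (simp_all add: St_def[abs_def] ht'_d)
  have indS: "indep_vars (\<lambda>_. borel) (\<lambda>j. case j of None \<Rightarrow> (\<lambda>\<omega>. real (Ns \<omega>)) | Some i \<Rightarrow> A i) UNIV"
    if Am: "\<And>i I. VPs i \<in> I \<Longrightarrow> VRs i \<in> I \<Longrightarrow> A i \<in> borel_measurable (sigma (space M) (\<Union>v\<in>I. Fam v))" for A
  proof (rule indep_group[OF indF stab, where I="\<lambda>j. case j of None \<Rightarrow> {VNs} | Some i \<Rightarrow> {VPs i, VRs i}"])
    show "disjoint_family_on (\<lambda>j. case j of None \<Rightarrow> {VNs} | Some i \<Rightarrow> {VPs i, VRs i}) UNIV"
      by (auto simp: disjoint_family_on_def split: option.split)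
    fix j :: "nat option"
    show "(case j of None \<Rightarrow> (\<lambda>\<omega>. real (Ns \<omega>)) | Some i \<Rightarrow> A i) \<in> borel_measurable
        (sigma (space M) (\<Union>v\<in>(case j of None \<Rightarrow> {VNs} | Some i \<Rightarrow> {VPs i, VRs i}). Fam v))"
    proof (cases j)
      case None
      then show ?thesis
        using measurable_compose[OF mNs[of "{VNs}"] borel_measurable_count_space[of real UNIV]] by (simp add: comp_def)
    next
      case (Some i)
      then show ?thesis using Am[of i "{VPs i, VRs i}"] by simp
    qed
  qed
  have indT: "indep_vars (\<lambda>_. borel) (\<lambda>j. case j of None \<Rightarrow> (\<lambda>\<omega>. real (Nt \<omega>)) | Some i \<Rightarrow> A i) UNIV"
    if Am: "\<And>i I. VPt i \<in> I \<Longrightarrow> VRt i \<in> I \<Longrightarrow> A i \<in> borel_measurable (sigma (space M) (\<Union>v\<in>I. Fam v))" for A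
  proof (rule indep_group[OF indF stab, where I="\<lambda>j. case j of None \<Rightarrow> {VUNt} | Some i \<Rightarrow> {VPt i, VRt i}"])
    show "disjoint_family_on (\<lambda>j. case j of None \<Rightarrow> {VUNt} | Some i \<Rightarrow> {VPt i, VRt i}) UNIV"
      by (auto simp: disjoint_family_on_def split: option.split)
    fix j :: "nat option"
    show "(case j of None \<Rightarrow> (\<lambda>\<omega>. real (Nt \<omega>)) | Some i \<Rightarrow> A i) \<in> borel_measurable
        (sigma (space M) (\<Union>v\<in>(case j of None \<Rightarrow> {VUNt} | Some i \<Rightarrow> {VPt i, VRt i}). Fam v))"
    proof (cases j)
      case None
      then show ?thesis
        using measurable_compose[OF mNt[of "{VUNt}"] borel_measurable_count_space[of real UNIV]] by (simp add: comp_def)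
    next
      case (Some i)
      then show ?thesis using Am[of i "{VPt i, VRt i}"] by simp
    qed
  qed
  have PNs: "prob {\<omega>\<in>space M. Ns \<omega> = n} = poisson_prob \<mu>s n" for n using Ns_dist .
  have PNt: "prob {\<omega>\<in>space M. Nt \<omega> = n} = \<gamma> * poisson_prob \<mu>t n + (1 - \<gamma>) * (if n = 0 then 1 else 0)" for n
  proof -
    have "{\<omega>\<in>space M. Nt \<omega> = n} = {\<omega>\<in>space M. U \<omega> = True \<and> Nt \<omega> = n} \<union> {\<omega>\<in>space M. U \<omega> = False \<and> Nt \<omega> = n}"
      by auto
    then have "prob {\<omega>\<in>space M. Nt \<omega> = n} = prob {\<omega>\<in>space M. U \<omega> = True \<and> Nt \<omega> = n} + prob {\<omega>\<in>space M. U \<omega> = False \<and> Nt \<omega> = n}"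
      by (simp only:) (rule finite_measure_Union; auto)
    then show ?thesis using UNt_dist[of True n] UNt_dist[of False n]
      by (simp add: poisson_prob_def)
  qed
  have mt1: "(\<lambda>n. real n * prob {\<omega>\<in>space M. Nt \<omega> = n}) sums (\<gamma> * \<mu>t)"
  proof -
    have "(\<lambda>n. real n * prob {\<omega>\<in>space M. Nt \<omega> = n}) = (\<lambda>n. \<gamma> * (real n * poisson_prob \<mu>t n))"
      by (auto simp: PNt fun_eq_iff algebra_simps)
    then show ?thesis using sums_mult[OF poisson_moments(1)] by simp
  qed
  have mt2: "(\<lambda>n. (real n)\<^sup>2 * prob {\<omega>\<in>space M. Nt \<omega> = n}) sums (\<gamma> * (\<mu>t + \<mu>t\<^sup>2))"
  proof -
    have "(\<lambda>n. (real n)\<^sup>2 * prob {\<omega>\<in>space M. Nt \<omega> = n}) = (\<lambda>n. \<gamma> * ((real n)\<^sup>2 * poisson_prob \<mu>t n))"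
      by (auto simp: PNt fun_eq_iff algebra_simps)
    then show ?thesis using sums_mult[OF poisson_moments(2)] by simp
  qed
  have ms1: "(\<lambda>n. real n * prob {\<omega>\<in>space M. Ns \<omega> = n}) sums \<mu>s"
    unfolding PNs by (rule poisson_moments(1))
  have ms2: "(\<lambda>n. (real n)\<^sup>2 * prob {\<omega>\<in>space M. Ns \<omega> = n}) sums (\<mu>s + \<mu>s\<^sup>2)"
    unfolding PNs by (rule poisson_moments(2))
  define Fcs where "Fcs \<omega> = (\<Sum>i<Ns \<omega>. Cs i \<omega>)" for \<omega>
  define Fss where "Fss \<omega> = (\<Sum>i<Ns \<omega>. Ss i \<omega>)" for \<omega>
  define Fct where "Fct \<omega> = (\<Sum>i<Nt \<omega>. Ct i \<omega>)" for \<omega>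
  define Fst where "Fst \<omega> = (\<Sum>i<Nt \<omega>. St i \<omega>)" for \<omega>
  have indCs: "indep_vars (\<lambda>_. borel) (\<lambda>j. case j of None \<Rightarrow> (\<lambda>\<omega>. real (Ns \<omega>)) | Some i \<Rightarrow> Cs i) UNIV"
    by (rule indS) (rule mCs)
  have indSs: "indep_vars (\<lambda>_. borel) (\<lambda>j. case j of None \<Rightarrow> (\<lambda>\<omega>. real (Ns \<omega>)) | Some i \<Rightarrow> Ss i) UNIV"
    by (rule indS) (rule mSs)
  have indCt: "indep_vars (\<lambda>_. borel) (\<lambda>j. case j of None \<Rightarrow> (\<lambda>\<omega>. real (Nt \<omega>)) | Some i \<Rightarrow> Ct i) UNIV"
    by (rule indT) (rule mCt)
  have indSt: "indep_vars (\<lambda>_. borel) (\<lambda>j. case j of None \<Rightarrow> (\<lambda>\<omega>. real (Nt \<omega>)) | Some i \<Rightarrow> St i) UNIV"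
    by (rule indT) (rule mSt)
  note cCs = compound[OF meas(2) indCs iCs1 iCs2 eCs1 eCs2 ms1 ms2, folded Fcs_def[abs_def]]
  note cSs = compound[OF meas(2) indSs iSs1 iSs2 eSs1 eSs2 ms1 ms2, folded Fss_def[abs_def]]
  note cCt = compound[OF meas(3) indCt iCt1 iCt2 eCt1 eCt2 mt1 mt2, folded Fct_def[abs_def]]
  note cSt = compound[OF meas(3) indSt iSt1 iSt2 eSt1 eSt2 mt1 mt2, folded Fst_def[abs_def]]
  define IS where "IS = {VNs} \<union> range VPs \<union> range VRs"
  define IT where "IT = {VUNt} \<union> range VPt \<union> range VRt"
  have mFs: "(\<lambda>\<omega>. \<Sum>i<Ns \<omega>. A i \<omega>) \<in> borel_measurable (sigma (space M) (\<Union>v\<in>IS. Fam v))"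
    if Am: "\<And>i I. VPs i \<in> I \<Longrightarrow> VRs i \<in> I \<Longrightarrow> A i \<in> borel_measurable (sigma (space M) (\<Union>v\<in>I. Fam v))" for A :: "nat \<Rightarrow> 'a \<Rightarrow> real"
  proof (rule measurable_compose_countable'[where I=UNIV and g=Ns and f="\<lambda>n \<omega>. \<Sum>i<n. A i \<omega>"])
    show "Ns \<in> measurable (sigma (space M) (\<Union>v\<in>IS. Fam v)) (count_space UNIV)"
      by (rule mNs) (simp add: IS_def)
    fix n
    show "(\<lambda>\<omega>. \<Sum>i<n. A i \<omega>) \<in> borel_measurable (sigma (space M) (\<Union>v\<in>IS. Fam v))"
    proof (rule borel_measurable_sum)
      fix i
      show "A i \<in> borel_measurable (sigma (space M) (\<Union>v\<in>IS. Fam v))"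
        by (rule Am) (simp_all add: IS_def)
    qed
  qed auto
  have mFt: "(\<lambda>\<omega>. \<Sum>i<Nt \<omega>. A i \<omega>) \<in> borel_measurable (sigma (space M) (\<Union>v\<in>IT. Fam v))"
    if Am: "\<And>i I. VPt i \<in> I \<Longrightarrow> VRt i \<in> I \<Longrightarrow> A i \<in> borel_measurable (sigma (space M) (\<Union>v\<in>I. Fam v))" for A :: "nat \<Rightarrow> 'a \<Rightarrow> real"
  proof (rule measurable_compose_countable'[where I=UNIV and g=Nt and f="\<lambda>n \<omega>. \<Sum>i<n. A i \<omega>"])
    show "Nt \<in> measurable (sigma (space M) (\<Union>v\<in>IT. Fam v)) (count_space UNIV)"
      by (rule mNt) (simp add: IT_def)
    fix n
    show "(\<lambda>\<omega>. \<Sum>i<n. A i \<omega>) \<in> borel_measurable (sigma (space M) (\<Union>v\<in>IT. Fam v))"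
    proof (rule borel_measurable_sum)
      fix i
      show "A i \<in> borel_measurable (sigma (space M) (\<Union>v\<in>IT. Fam v))"
        by (rule Am) (simp_all add: IT_def)
    qed
  qed auto
  have indST: "indep_var borel X borel Y"
    if mX: "X \<in> borel_measurable (sigma (space M) (\<Union>v\<in>IS. Fam v))"
    and mY: "Y \<in> borel_measurable (sigma (space M) (\<Union>v\<in>IT. Fam v))" for X Y :: "'a \<Rightarrow> real"
  proof -
    have cb: "case_bool (borel :: real measure) borel = (\<lambda>_. borel)"
      by (auto simp: fun_eq_iff split: bool.split)
    have "indep_vars (\<lambda>_. borel) (case_bool X Y) UNIV"
    proof (rule indep_group[OF indF stab, where I="case_bool IS IT"])
      show "disjoint_family_on (case_bool IS IT) UNIV"
        by (auto simp: disjoint_family_on_def IS_def IT_def split: bool.split)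
      fix j :: bool
      show "case_bool X Y j \<in> borel_measurable (sigma (space M) (\<Union>v\<in>case_bool IS IT j. Fam v))"
        by (cases j) (simp_all add: mX mY)
    qed
    then show ?thesis unfolding indep_var_def cb .
  qed
  have iC: "indep_var borel Fcs borel Fct"
    unfolding Fcs_def[abs_def] Fct_def[abs_def] by (rule indST; rule mFs mFt; rule mCs mCt)
  have iS: "indep_var borel Fss borel Fst"
    unfolding Fss_def[abs_def] Fst_def[abs_def] by (rule indST; rule mFs mFt; rule mSs mSt)
  have crossC: "integrable M (\<lambda>\<omega>. Fcs \<omega> * Fct \<omega>)" "integral\<^sup>L M (\<lambda>\<omega>. Fcs \<omega> * Fct \<omega>) = integral\<^sup>L M Fcs * integral\<^sup>L M Fct"
    using indep_var_integrable[OF iC cCs(1) cCt(1)] indep_var_lebesgue_integral[OF iC cCs(1) cCt(1)] by auto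
  have crossS: "integrable M (\<lambda>\<omega>. Fss \<omega> * Fst \<omega>)" "integral\<^sup>L M (\<lambda>\<omega>. Fss \<omega> * Fst \<omega>) = integral\<^sup>L M Fss * integral\<^sup>L M Fst"
    using indep_var_integrable[OF iS cSs(1) cSt(1)] indep_var_lebesgue_integral[OF iS cSs(1) cSt(1)] by auto
  have var: "integral\<^sup>L M (\<lambda>\<omega>. (X \<omega> - integral\<^sup>L M X)\<^sup>2) = integral\<^sup>L M (\<lambda>\<omega>. (X \<omega>)\<^sup>2) - (integral\<^sup>L M X)\<^sup>2"
    if "integrable M X" "integrable M (\<lambda>\<omega>. (X \<omega>)\<^sup>2)" for X :: "'a \<Rightarrow> real"
  proof -
    let ?c = "integral\<^sup>L M X"
    have "has_bochner_integral M (\<lambda>\<omega>. (X \<omega>)\<^sup>2 + (- 2 * ?c) * X \<omega> + ?c\<^sup>2) (integral\<^sup>L M (\<lambda>\<omega>. (X \<omega>)\<^sup>2) + (- 2 * ?c) * ?c + ?c\<^sup>2)"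
      using that prob_space
      by (intro has_bochner_integral_add has_bochner_integral_mult_right)
         (auto simp: has_bochner_integral_iff)
    moreover have "(\<lambda>\<omega>. (X \<omega> - ?c)\<^sup>2) = (\<lambda>\<omega>. (X \<omega>)\<^sup>2 + (- 2 * ?c) * X \<omega> + ?c\<^sup>2)"
      by (auto simp: fun_eq_iff power2_eq_square algebra_simps)
    ultimately show ?thesis by (simp add: has_bochner_integral_iff power2_eq_square)
  qed
  have gs_eq: "gs = integral\<^sup>L M (\<lambda>\<omega>. (Cs 0 \<omega>)\<^sup>2) - hs\<^sup>2"
    using var[OF iCs1[of 0] iCs2[of 0]] by (simp add: gs_d hs_d Cs_def[abs_def])
  have gs'_eq: "gs' = integral\<^sup>L M (\<lambda>\<omega>. (Ss 0 \<omega>)\<^sup>2) - hs'\<^sup>2"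
    using var[OF iSs1[of 0] iSs2[of 0]] by (simp add: gs'_d hs'_d Ss_def[abs_def])
  have gt_eq: "gt = integral\<^sup>L M (\<lambda>\<omega>. (Ct 0 \<omega>)\<^sup>2) - ht\<^sup>2"
    using var[OF iCt1[of 0] iCt2[of 0]] by (simp add: gt_d ht_d Ct_def[abs_def])
  have gt'_eq: "gt' = integral\<^sup>L M (\<lambda>\<omega>. (St 0 \<omega>)\<^sup>2) - ht'\<^sup>2"
    using var[OF iSt1[of 0] iSt2[of 0]] by (simp add: gt'_d ht'_d St_def[abs_def])
  have Fcs_i2: "integrable M (\<lambda>\<omega>. (Fcs \<omega>)\<^sup>2)" using cCs(3) by (simp add: Fcs_def)
  have Fcs_e2: "integral\<^sup>L M (\<lambda>\<omega>. (Fcs \<omega>)\<^sup>2) = integral\<^sup>L M (\<lambda>\<omega>. (\<Sum>i<Ns \<omega>. Cs i \<omega>)\<^sup>2)" by (simp add: Fcs_def)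
  have Fss_i2: "integrable M (\<lambda>\<omega>. (Fss \<omega>)\<^sup>2)" using cSs(3) by (simp add: Fss_def)
  have Fss_e2: "integral\<^sup>L M (\<lambda>\<omega>. (Fss \<omega>)\<^sup>2) = integral\<^sup>L M (\<lambda>\<omega>. (\<Sum>i<Ns \<omega>. Ss i \<omega>)\<^sup>2)" by (simp add: Fss_def)
  have Fct_i2: "integrable M (\<lambda>\<omega>. (Fct \<omega>)\<^sup>2)" using cCt(3) by (simp add: Fct_def)
  have Fct_e2: "integral\<^sup>L M (\<lambda>\<omega>. (Fct \<omega>)\<^sup>2) = integral\<^sup>L M (\<lambda>\<omega>. (\<Sum>i<Nt \<omega>. Ct i \<omega>)\<^sup>2)" by (simp add: Fct_def)
  have Fst_i2: "integrable M (\<lambda>\<omega>. (Fst \<omega>)\<^sup>2)" using cSt(3) by (simp add: Fst_def)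
  have Fst_e2: "integral\<^sup>L M (\<lambda>\<omega>. (Fst \<omega>)\<^sup>2) = integral\<^sup>L M (\<lambda>\<omega>. (\<Sum>i<Nt \<omega>. St i \<omega>)\<^sup>2)" by (simp add: Fst_def)
  have Preq: "Pr = (\<lambda>\<omega>. k0 * (((Fcs \<omega>)\<^sup>2 + 2 * (Fcs \<omega> * Fct \<omega>) + (Fct \<omega>)\<^sup>2) + ((Fss \<omega>)\<^sup>2 + 2 * (Fss \<omega> * Fst \<omega>) + (Fst \<omega>)\<^sup>2)))"
  proof
    fix \<omega>
    let ?z = "(\<Sum>i<Ns \<omega>. path_gain wl g1 g2 o' (Rs i \<omega>) (Ps i \<omega>)) + (\<Sum>i<Nt \<omega>. path_gain wl g1 g2 o' (Rt i \<omega>) (Pt i \<omega>))"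
    have re: "Re ?z = Fcs \<omega> + Fct \<omega>"
      by (simp add: Re_sum path_gain_Re Fcs_def Fct_def Cs_def Ct_def)
    have im: "Im ?z = - (Fss \<omega> + Fst \<omega>)"
      by (simp add: Im_sum path_gain_Im Fss_def Fst_def Ss_def St_def sum_negf)
    have "(cmod ?z)\<^sup>2 = (Fcs \<omega> + Fct \<omega>)\<^sup>2 + (Fss \<omega> + Fst \<omega>)\<^sup>2"
      unfolding cmod_power2 re im by (simp add: power2_eq_square algebra_simps)
    then show "Pr \<omega> = k0 * (((Fcs \<omega>)\<^sup>2 + 2 * (Fcs \<omega> * Fct \<omega>) + (Fct \<omega>)\<^sup>2) + ((Fss \<omega>)\<^sup>2 + 2 * (Fss \<omega> * Fst \<omega>) + (Fst \<omega>)\<^sup>2))"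
      unfolding Pr_d by (simp add: power2_sum)
  qed
  have hb: "has_bochner_integral M Pr
     (k0 * ((integral\<^sup>L M (\<lambda>\<omega>. (Fcs \<omega>)\<^sup>2) + 2 * (integral\<^sup>L M Fcs * integral\<^sup>L M Fct) + integral\<^sup>L M (\<lambda>\<omega>. (Fct \<omega>)\<^sup>2))
        + (integral\<^sup>L M (\<lambda>\<omega>. (Fss \<omega>)\<^sup>2) + 2 * (integral\<^sup>L M Fss * integral\<^sup>L M Fst) + integral\<^sup>L M (\<lambda>\<omega>. (Fst \<omega>)\<^sup>2))))"
    unfolding Preq
    using Fcs_i2 Fct_i2 Fss_i2 Fst_i2 crossC crossS
    by (intro has_bochner_integral_add has_bochner_integral_mult_right)
       (auto simp: has_bochner_integral_iff)
  have fin: "k0 * ((integral\<^sup>L M (\<lambda>\<omega>. (Fcs \<omega>)\<^sup>2) + 2 * (integral\<^sup>L M Fcs * integral\<^sup>L M Fct) + integral\<^sup>L M (\<lambda>\<omega>. (Fct \<omega>)\<^sup>2))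
        + (integral\<^sup>L M (\<lambda>\<omega>. (Fss \<omega>)\<^sup>2) + 2 * (integral\<^sup>L M Fss * integral\<^sup>L M Fst) + integral\<^sup>L M (\<lambda>\<omega>. (Fst \<omega>)\<^sup>2)))
    = \<gamma> * k0 * ((gs + hs\<^sup>2 + gs' + hs'\<^sup>2) * \<mu>s + (gt + ht\<^sup>2 + gt' + ht'\<^sup>2) * \<mu>t
                + (hs * \<mu>s + ht * \<mu>t)\<^sup>2 + (hs' * \<mu>s + ht' * \<mu>t)\<^sup>2)
    + (1 - \<gamma>) * k0 * ((gs + hs\<^sup>2 + gs' + hs'\<^sup>2) * \<mu>s + (hs * \<mu>s)\<^sup>2 + (hs' * \<mu>s)\<^sup>2)"
    unfolding Fcs_e2 Fct_e2 Fss_e2 Fst_e2 cCs(2,4) cCt(2,4) cSs(2,4) cSt(2,4) gs_eq gs'_eq gt_eq gt'_eq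
    by (simp add: power2_eq_square algebra_simps)
  show ?thesis using hb fin by (simp add: has_bochner_integral_iff)
qed

end
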